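(* Let $q$ be a distribution over $[n]$, let $S\subseteq[n]$ be nonempty with $R(q,S)\ge1$, let $0\le\varepsilon_1<\varepsilon_2$ and $\delta>0$. Then \[ \mathsf{SC}(q,\varepsilon_1,\varepsilon_2,\delta)\ \ge\ \frac{4}{q(S)}\cdot \mathsf{SC}\Big(\mathrm{Unif}_{R(q,S)},\ \frac{4\varepsilon_1}{q(S)},\ \frac{4\varepsilon_2}{q(S)},\ \delta\Big). \]
   Context: For a distribution $q$ over a finite domain, $0\le\varepsilon_1<\varepsilon_2$ and $\delta>0$, $\mathsf{SC}(q,\varepsilon_1,\varepsilon_2,\delta)$ denotes the minimum $m$ such that some tester, given $\mathrm{Poi}(m)$ i.i.d. samples (Poissonized sampling) from an unknown distribution $p$ on the same domain and the full description of $q$, correctly distinguishes $\|p-q\|_1\le\varepsilon_1$ from $\|p-q\|_1\ge\varepsilon_2$ with probability at least $1-\delta$ for every such $p$. For $S\subseteq[n]$, $q(S)=\sum_{i\in S}q_i$, $M(q,S)=\max_{i\in S}q_i$ and $R(q,S)=\big\lfloor \frac{q(S)}{2M(q,S)}\big\rfloor$. $\mathrm{Unif}_t$ is the uniform distribution on $[t]$. *)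

theory Defs
  imports "HOL-Probability.Probability"
begin

definition Poi :: "real \<Rightarrow> nat pmf" where
  "Poi m = (if 0 < m then poisson_pmf m else return_pmf 0)"

definition l1dist :: "nat set \<Rightarrow> nat pmf \<Rightarrow> nat pmf \<Rightarrow> real" where
  "l1dist D p q = (\<Sum>i\<in>D. \<bar>pmf p i - pmf q i\<bar>)"

(* Output distribution of a (randomized) tester T fed with Poi(m) i.i.d. samples from p.
   Output True = "close", False = "far". *)
definition tester_out :: "(nat list \<Rightarrow> bool pmf) \<Rightarrow> real \<Rightarrow> nat pmf \<Rightarrow> bool pmf" where
  "tester_out T m p = bind_pmf (Poi m) (\<lambda>N. bind_pmf (replicate_pmf N p) T)"

definition good_tester ::
  "nat set \<Rightarrow> nat pmf \<Rightarrow> real \<Rightarrow> real \<Rightarrow> real \<Rightarrow> real \<Rightarrow> (nat list \<Rightarrow> bool pmf) \<Rightarrow> bool" where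
  "good_tester D q e1 e2 \<delta> m T \<longleftrightarrow>
     (\<forall>p. set_pmf p \<subseteq> D \<longrightarrow>
        (l1dist D p q \<le> e1 \<longrightarrow> measure_pmf.prob (tester_out T m p) {True} \<ge> 1 - \<delta>) \<and>
        (l1dist D p q \<ge> e2 \<longrightarrow> measure_pmf.prob (tester_out T m p) {False} \<ge> 1 - \<delta>))"

definition SC :: "nat set \<Rightarrow> nat pmf \<Rightarrow> real \<Rightarrow> real \<Rightarrow> real \<Rightarrow> real" where
  "SC D q e1 e2 \<delta> = Inf {m. 0 \<le> m \<and> (\<exists>T. good_tester D q e1 e2 \<delta> m T)}"

definition qmass :: "nat pmf \<Rightarrow> nat set \<Rightarrow> real" where
  "qmass q S = (\<Sum>i\<in>S. pmf q i)"

definition Mmax :: "nat pmf \<Rightarrow> nat set \<Rightarrow> real" where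
  "Mmax q S = Max (pmf q ` S)"

definition Rnum :: "nat pmf \<Rightarrow> nat set \<Rightarrow> nat" where
  "Rnum q S = nat \<lfloor>qmass q S / (2 * Mmax q S)\<rfloor>"

definition Unif :: "nat \<Rightarrow> nat pmf" where
  "Unif t = pmf_of_set {1..t}"

end

theory Submission
  imports Defs "HOL-Real_Asymp.Real_Asymp"
begin

fun seqp :: "'a pmf list \<Rightarrow> 'a list pmf" where
  "seqp [] = return_pmf []"
| "seqp (M # Ms) = bind_pmf M (\<lambda>x. map_pmf ((#) x) (seqp Ms))"

lemma replicate_bind:
  "replicate_pmf N (bind_pmf P K) = bind_pmf (replicate_pmf N P) (\<lambda>zs. seqp (map K zs))"
proof (induction N)
  case 0
  then show ?case by (simp add: bind_return_pmf)
next
  case (Suc N)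
  show ?case
    apply (simp add: Suc bind_assoc_pmf bind_return_pmf map_pmf_def)
    apply (subst bind_commute_pmf)
    apply simp
    done
qed

fun fill :: "bool list \<Rightarrow> 'a list \<Rightarrow> 'a list \<Rightarrow> 'a list" where
  "fill [] xs ys = []"
| "fill (True # bs) xs ys = hd xs # fill bs (tl xs) ys"
| "fill (False # bs) xs ys = hd ys # fill bs xs (tl ys)"

definition ct :: "bool list \<Rightarrow> nat" where "ct bs = length (filter id bs)"
definition cf :: "bool list \<Rightarrow> nat" where "cf bs = length (filter Not bs)"

lemma seqp_mix:
  "seqp (map (\<lambda>b. if b then A else B) bs) =
   bind_pmf (replicate_pmf (ct bs) A) (\<lambda>xs. bind_pmf (replicate_pmf (cf bs) B)
      (\<lambda>ys. return_pmf (fill bs xs ys)))"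
proof (induction bs)
  case Nil
  then show ?case by (simp add: ct_def cf_def bind_return_pmf)
next
  case (Cons b bs)
  show ?case
  proof (cases b)
    case True
    then show ?thesis
      by (simp add: Cons ct_def cf_def bind_assoc_pmf bind_return_pmf map_pmf_def)
  next
    case False
    then show ?thesis
      apply (simp add: Cons ct_def cf_def bind_assoc_pmf bind_return_pmf map_pmf_def)
      apply (subst bind_commute_pmf)
      apply (rule bind_pmf_cong, simp)
      apply (rule refl)
      done
  qed
qed

lemma rep_pair: "replicate_pmf (Suc N) p = map_pmf (\<lambda>(x,xs). x#xs) (pair_pmf p (replicate_pmf N p))"
  by (simp add: pair_pmf_def map_pmf_def bind_assoc_pmf bind_return_pmf)

lemma pmf_replicate:
  "pmf (replicate_pmf N p) xs = (if length xs = N then prod_list (map (pmf p) xs) else 0)"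
proof (induction N arbitrary: xs)
  case 0
  then show ?case by (cases xs) auto
next
  case (Suc N)
  show ?case
  proof (cases xs)
    case Nil
    have "xs \<notin> set_pmf (replicate_pmf (Suc N) p)" using Nil by (simp add: set_replicate_pmf)
    then show ?thesis using Nil by (simp add: set_pmf_iff del: replicate_pmf.simps)
  next
    case (Cons y ys)
    have inj: "inj (\<lambda>(x::'a,xs). x#xs)" by (auto simp: inj_on_def)
    have "pmf (replicate_pmf (Suc N) p) xs = pmf (pair_pmf p (replicate_pmf N p)) (y, ys)"
      unfolding rep_pair Cons using pmf_map_inj'[OF inj, of _ "(y,ys)"] by simp
    also have "\<dots> = pmf p y * pmf (replicate_pmf N p) ys" by (simp add: pmf_pair)
    finally show ?thesis using Suc Cons by simp
  qed
qed

lemma prod_bern: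
  assumes "0 \<le> c" "c \<le> 1"
  shows "prod_list (map (pmf (bernoulli_pmf c)) bs) = c ^ ct bs * (1 - c) ^ cf bs"
  by (induction bs) (use assms in \<open>auto simp: ct_def cf_def\<close>)

lemma prob_ct:
  assumes "0 \<le> c" "c \<le> 1"
  shows "measure_pmf.prob (replicate_pmf N (bernoulli_pmf c)) {bs. ct bs = a} =
         real (N choose a) * c ^ a * (1 - c) ^ (N - a)"
proof -
  have "measure_pmf.prob (replicate_pmf N (bernoulli_pmf c)) {bs. ct bs = a} =
        pmf (map_pmf ct (replicate_pmf N (bernoulli_pmf c))) a"
    by (simp add: pmf_map vimage_def)
  also have "map_pmf ct (replicate_pmf N (bernoulli_pmf c)) = binomial_pmf N c"
    using binomial_pmf_altdef[of c N] assms by (simp add: ct_def[abs_def] o_def)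
  finally show ?thesis using assms by simp
qed

lemma ct_cf_len: "ct bs + cf bs = length bs"
  unfolding ct_def cf_def by (induction bs) auto

lemma poisson_split:
  assumes c: "0 < c" "c < 1" and m: "0 < m"
  shows "bind_pmf (poisson_pmf m) (\<lambda>N. replicate_pmf N (bernoulli_pmf c)) =
    bind_pmf (poisson_pmf (c*m)) (\<lambda>a. bind_pmf (poisson_pmf ((1-c)*m)) (\<lambda>b.
       cond_pmf (replicate_pmf (a+b) (bernoulli_pmf c)) {bs. ct bs = a}))"
    (is "?L = ?R")
proof (rule pmf_eqI)
  fix bs :: "bool list"
  define a0 where "a0 = ct bs"
  define b0 where "b0 = cf bs"
  have len: "length bs = a0 + b0" using ct_cf_len[of bs] by (simp add: a0_def b0_def)
  have cm: "0 < c*m" "0 < (1-c)*m" using c m by auto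
  have ne: "set_pmf (replicate_pmf (a+b) (bernoulli_pmf c)) \<inter> {bs. ct bs = a} \<noteq> {}" for a b
  proof -
    have "replicate a True @ replicate b False \<in> set_pmf (replicate_pmf (a+b) (bernoulli_pmf c)) \<inter> {bs. ct bs = a}"
      using c by (auto simp: set_replicate_pmf ct_def)
    then show ?thesis by blast
  qed
  have L: "pmf ?L bs = pmf (poisson_pmf m) (a0+b0) * (c ^ a0 * (1-c) ^ b0)"
    unfolding pmf_bind
    by (subst integral_measure_pmf_real[where A="{a0+b0}"])
       (auto simp: pmf_replicate len prod_bern c less_imp_le a0_def b0_def split: if_splits)
  have inner: "pmf (cond_pmf (replicate_pmf (a+b) (bernoulli_pmf c)) {bs. ct bs = a}) bs =
     (if a = a0 \<and> b = b0 then
        (c ^ a0 * (1-c) ^ b0) / (real ((a0+b0) choose a0) * c ^ a0 * (1 - c) ^ b0) else 0)" for a b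
    using ne[of a b] c
    by (auto simp: pmf_cond prob_ct pmf_replicate len prod_bern less_imp_le a0_def b0_def)
  have R: "pmf ?R bs = pmf (poisson_pmf (c*m)) a0 * pmf (poisson_pmf ((1-c)*m)) b0 *
      ((c ^ a0 * (1-c) ^ b0) / (real ((a0+b0) choose a0) * c ^ a0 * (1 - c) ^ b0))"
  proof -
    define V where "V = (c ^ a0 * (1-c) ^ b0) / (real ((a0+b0) choose a0) * c ^ a0 * (1 - c) ^ b0)"
    have i2: "measure_pmf.expectation (poisson_pmf ((1-c)*m)) (\<lambda>b. pmf (cond_pmf (replicate_pmf (a+b) (bernoulli_pmf c)) {bs. ct bs = a}) bs)
       = (if a = a0 then pmf (poisson_pmf ((1-c)*m)) b0 * V else 0)" for a
      unfolding inner V_def[symmetric]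
      by (subst integral_measure_pmf_real[where A="{b0}"]) (auto split: if_splits)
    show ?thesis
      unfolding pmf_bind i2 V_def[symmetric]
      by (subst integral_measure_pmf_real[where A="{a0}"]) (auto split: if_splits)
  qed
  have ch: "real ((a0+b0) choose a0) = fact (a0+b0) / (fact a0 * fact b0)"
    by (simp add: binomial_fact)
  have e: "exp (- (c*m)) * exp (- ((1-c)*m)) = exp (-m)"
    by (simp add: exp_add[symmetric] algebra_simps)
  have pc: "c ^ a0 * (1-c) ^ b0 > 0" using c by simp
  have fpos: "fact a0 > (0::real)" "fact b0 > (0::real)" "fact (a0+b0) > (0::real)" by auto
  show "pmf ?L bs = pmf ?R bs"
    unfolding L R using cm m pc fpos
    apply (simp add: ch power_mult_distrib power_add)
    apply (simp add: field_simps)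
    using e apply (simp add: algebra_simps)
    done
qed

definition Tb :: "real \<Rightarrow> real \<Rightarrow> 'a pmf \<Rightarrow> ('a list \<Rightarrow> 'b pmf) \<Rightarrow> 'a list \<Rightarrow> 'b pmf" where
  "Tb c m B T xs = bind_pmf (poisson_pmf ((1-c)*m)) (\<lambda>b.
      bind_pmf (cond_pmf (replicate_pmf (length xs + b) (bernoulli_pmf c)) {bs. ct bs = length xs})
        (\<lambda>bs. bind_pmf (replicate_pmf b B) (\<lambda>ys. T (fill bs xs ys))))"

lemma reduction:
  assumes c: "0 < c" "c < 1" and m: "0 < m"
  shows "bind_pmf (poisson_pmf m) (\<lambda>N. bind_pmf (replicate_pmf N
            (bind_pmf (bernoulli_pmf c) (\<lambda>b. if b then A else B))) T) =
         bind_pmf (poisson_pmf (c*m)) (\<lambda>a. bind_pmf (replicate_pmf a A) (Tb c m B T))"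
proof -
  define Fill where "Fill bs = bind_pmf (replicate_pmf (ct bs) A) (\<lambda>xs. bind_pmf (replicate_pmf (cf bs) B)
      (\<lambda>ys. return_pmf (fill bs xs ys)))" for bs
  define cnd where "cnd a b = cond_pmf (replicate_pmf (a+b) (bernoulli_pmf c)) {bs. ct bs = a}" for a b
  have ne: "set_pmf (replicate_pmf (a+b) (bernoulli_pmf c)) \<inter> {bs. ct bs = a} \<noteq> {}" for a b
  proof -
    have "replicate a True @ replicate b False \<in> set_pmf (replicate_pmf (a+b) (bernoulli_pmf c)) \<inter> {bs. ct bs = a}"
      using c by (auto simp: set_replicate_pmf ct_def)
    then show ?thesis by blast
  qed
  have setc: "bs \<in> set_pmf (cnd a b) \<Longrightarrow> ct bs = a \<and> cf bs = b" for a b bs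
    using ne[of a b] ct_cf_len[of bs] unfolding cnd_def
    by (auto simp: set_cond_pmf set_replicate_pmf)
  have "bind_pmf (poisson_pmf m) (\<lambda>N. bind_pmf (replicate_pmf N
            (bind_pmf (bernoulli_pmf c) (\<lambda>b. if b then A else B))) T) =
        bind_pmf (poisson_pmf m) (\<lambda>N. bind_pmf (replicate_pmf N (bernoulli_pmf c)) (\<lambda>bs. bind_pmf (Fill bs) T))"
    by (simp add: replicate_bind bind_assoc_pmf seqp_mix Fill_def)
  also have "\<dots> = bind_pmf (bind_pmf (poisson_pmf m) (\<lambda>N. replicate_pmf N (bernoulli_pmf c))) (\<lambda>bs. bind_pmf (Fill bs) T)"
    by (simp add: bind_assoc_pmf)
  also have "\<dots> = bind_pmf (poisson_pmf (c*m)) (\<lambda>a. bind_pmf (poisson_pmf ((1-c)*m)) (\<lambda>b.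
       bind_pmf (cnd a b) (\<lambda>bs. bind_pmf (Fill bs) T)))"
    unfolding poisson_split[OF c m] by (simp add: bind_assoc_pmf cnd_def)
  also have "\<dots> = bind_pmf (poisson_pmf (c*m)) (\<lambda>a. bind_pmf (poisson_pmf ((1-c)*m)) (\<lambda>b.
       bind_pmf (cnd a b) (\<lambda>bs. bind_pmf (replicate_pmf a A) (\<lambda>xs. bind_pmf (replicate_pmf b B)
        (\<lambda>ys. T (fill bs xs ys))))))"
    apply (rule bind_pmf_cong[OF refl], rule bind_pmf_cong[OF refl], rule bind_pmf_cong[OF refl])
    subgoal for a b bs using setc[of bs a b] by (simp add: Fill_def bind_assoc_pmf bind_return_pmf)
    done
  also have "\<dots> = bind_pmf (poisson_pmf (c*m)) (\<lambda>a. bind_pmf (replicate_pmf a A) (\<lambda>xs.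
       bind_pmf (poisson_pmf ((1-c)*m)) (\<lambda>b. bind_pmf (cnd a b) (\<lambda>bs. bind_pmf (replicate_pmf b B)
        (\<lambda>ys. T (fill bs xs ys))))))"
    apply (rule bind_pmf_cong[OF refl])
    apply (subst bind_commute_pmf[of "cnd _ _"])
    apply (subst bind_commute_pmf)
    apply (rule refl)
    done
  also have "\<dots> = bind_pmf (poisson_pmf (c*m)) (\<lambda>a. bind_pmf (replicate_pmf a A) (Tb c m B T))"
    apply (rule bind_pmf_cong[OF refl], rule bind_pmf_cong[OF refl])
    subgoal for a xs by (simp add: Tb_def cnd_def set_replicate_pmf)
    done
  finally show ?thesis .
qed

lemma prob_bind_le:
  fixes M :: "'a pmf" and f :: "'a \<Rightarrow> 'b pmf"
  assumes "\<And>x. x \<in> set_pmf M \<Longrightarrow> x \<notin> B \<Longrightarrow> pmf (f x) b \<le> e" and "e \<ge> 0"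
  shows "pmf (bind_pmf M f) b \<le> measure_pmf.prob M B + e"
proof -
  have int1: "integrable (measure_pmf M) (\<lambda>x. pmf (f x) b)"
    by (rule measure_pmf.integrable_const_bound[where B=1]) (auto simp: pmf_le_1)
  have "pmf (bind_pmf M f) b = measure_pmf.expectation M (\<lambda>x. pmf (f x) b)" by (simp add: pmf_bind)
  also have "\<dots> \<le> measure_pmf.expectation M (\<lambda>x. indicator B x + e)"
  proof (rule integral_mono_AE)
    show "integrable (measure_pmf M) (\<lambda>x. indicator B x + e)"
      by (rule measure_pmf.integrable_const_bound[where B="1+e"]) (use assms(2) in \<open>auto simp: indicator_def\<close>)
    show "AE x in measure_pmf M. pmf (f x) b \<le> indicator B x + e"
      using assms by (auto simp: AE_measure_pmf_iff indicator_def pmf_le_1 add_increasing2)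
  qed (rule int1)
  also have "\<dots> = measure_pmf.prob M B + e"
    by (subst Bochner_Integration.integral_add)
       (auto intro!: measure_pmf.integrable_const_bound[where B=1] simp: indicator_def)
  finally show ?thesis .
qed

definition cnt :: "nat \<Rightarrow> nat list \<Rightarrow> nat" where "cnt i xs = length (filter (\<lambda>x. x = i) xs)"
definition dev :: "nat set \<Rightarrow> nat pmf \<Rightarrow> nat list \<Rightarrow> real" where
  "dev D p xs = (\<Sum>i\<in>D. \<bar>real (cnt i xs) / real (length xs) - pmf p i\<bar>)"

lemma map_replicate: "map_pmf (map f) (replicate_pmf N p) = replicate_pmf N (map_pmf f p)"
proof (induction N)
  case 0
  then show ?case by simp
next
  case (Suc N)
  have "replicate_pmf (Suc N) (map_pmf f p) = bind_pmf (map_pmf f p) (\<lambda>x. bind_pmf (map_pmf (map f) (replicate_pmf N p)) (\<lambda>xs. return_pmf (x#xs)))"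
    by (simp only: replicate_pmf.simps Suc.IH[symmetric])
  then show ?case by (simp add: map_pmf_def bind_assoc_pmf bind_return_pmf)
qed

lemma map_eq_bern: "map_pmf (\<lambda>x. x = i) p = bernoulli_pmf (pmf p i)"
proof (rule pmf_eqI)
  fix b :: bool
  have v1: "(\<lambda>x. x = i) -` {True} = {i}" by auto
  have v2: "(\<lambda>x. x = i) -` {False} = UNIV - {i}" by auto
  have c: "measure_pmf.prob p (UNIV - {i}) = 1 - pmf p i"
    using measure_pmf.prob_compl[of "{i}" p] by (simp add: measure_pmf_single)
  show "pmf (map_pmf (\<lambda>x. x = i) p) b = pmf (bernoulli_pmf (pmf p i)) b"
    by (cases b) (simp_all add: pmf_map v1 v2 c measure_pmf_single pmf_le_1)
qed

lemma cnt_binom: "map_pmf (cnt i) (replicate_pmf N p) = binomial_pmf N (pmf p i)"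
proof -
  have "binomial_pmf N (pmf p i) = map_pmf (length \<circ> filter id) (replicate_pmf N (map_pmf (\<lambda>x. x = i) p))"
    unfolding map_eq_bern by (rule binomial_pmf_altdef) (simp add: pmf_le_1)
  also have "\<dots> = map_pmf (cnt i) (replicate_pmf N p)"
    unfolding map_replicate[symmetric] map_pmf_comp
    by (simp add: cnt_def[abs_def] filter_map o_def)
  finally show ?thesis by simp
qed

lemma dev_tail:
  assumes D: "finite D" "D \<noteq> {}" and N: "N > 0" and eta: "\<eta> > 0"
  shows "measure_pmf.prob (replicate_pmf N p) {xs. dev D p xs \<ge> \<eta>}
     \<le> real (card D) * (2 * exp (- 2 * real N * (\<eta> / card D)\<^sup>2))"
proof -
  define k where "k = real (card D)"
  have k: "k > 0" using D by (simp add: k_def card_gt_0_iff)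
  define E where "E i = {xs. \<eta> / k \<le> \<bar>real (cnt i xs) / real N - pmf p i\<bar>}" for i
  have sub: "{xs. dev D p xs \<ge> \<eta>} \<inter> set_pmf (replicate_pmf N p) \<subseteq> (\<Union>i\<in>D. E i)"
  proof
    fix xs assume xs: "xs \<in> {xs. dev D p xs \<ge> \<eta>} \<inter> set_pmf (replicate_pmf N p)"
    then have len: "length xs = N" by (simp add: set_replicate_pmf)
    show "xs \<in> (\<Union>i\<in>D. E i)"
    proof (rule ccontr)
      assume "xs \<notin> (\<Union>i\<in>D. E i)"
      then have lt: "\<forall>i\<in>D. \<bar>real (cnt i xs) / real N - pmf p i\<bar> < \<eta> / k" by (auto simp: E_def not_le)
      have "dev D p xs < (\<Sum>i\<in>D. \<eta> / k)"
        unfolding dev_def len using lt D by (intro sum_strict_mono) auto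
      also have "\<dots> = \<eta>" using k by (simp add: k_def)
      finally show False using xs by simp
    qed
  qed
  have "measure_pmf.prob (replicate_pmf N p) {xs. dev D p xs \<ge> \<eta>} =
        measure_pmf.prob (replicate_pmf N p) ({xs. dev D p xs \<ge> \<eta>} \<inter> set_pmf (replicate_pmf N p))"
    by (simp add: measure_Int_set_pmf)
  also have "\<dots> \<le> measure_pmf.prob (replicate_pmf N p) (\<Union>i\<in>D. E i)"
    by (rule measure_pmf.finite_measure_mono[OF sub]) simp
  also have "\<dots> \<le> (\<Sum>i\<in>D. measure_pmf.prob (replicate_pmf N p) (E i))"
    by (rule measure_pmf.finite_measure_subadditive_finite) (use D in auto)
  also have "\<dots> \<le> (\<Sum>i\<in>D. 2 * exp (- 2 * real N * (\<eta> / k)\<^sup>2))"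
  proof (rule sum_mono)
    fix i assume "i \<in> D"
    have "measure_pmf.prob (replicate_pmf N p) (E i) =
          measure_pmf.prob (map_pmf (cnt i) (replicate_pmf N p)) {x. \<eta> / k \<le> \<bar>real x / real N - pmf p i\<bar>}"
      by (simp add: E_def vimage_def)
    also have "\<dots> = measure_pmf.prob (binomial_pmf N (pmf p i)) {x. \<eta> / k \<le> \<bar>real x / real N - pmf p i\<bar>}"
      by (simp add: cnt_binom)
    also have "\<dots> \<le> 2 * exp (real_of_int (- 2 * int N) * (\<eta> / k)\<^sup>2)"
      by (rule binomial_distribution.prob_abs_ge')
         (use N eta k in \<open>auto simp: binomial_distribution_def pmf_le_1\<close>)
    finally show "measure_pmf.prob (replicate_pmf N p) (E i) \<le> 2 * exp (- 2 * real N * (\<eta> / k)\<^sup>2)"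
      by simp
  qed
  also have "\<dots> = k * (2 * exp (- 2 * real N * (\<eta> / k)\<^sup>2))" by (simp add: k_def)
  finally show ?thesis by (simp add: k_def)
qed

lemma bool_pmf: "pmf M True = 1 - pmf M (False::bool)"
proof -
  have "sum (pmf M) (UNIV::bool set) = 1" by (rule sum_pmf_eq_1) auto
  then show ?thesis by (simp add: UNIV_bool)
qed

lemma dev_tri1: "dev D q xs \<le> dev D p xs + l1dist D p q"
  unfolding dev_def l1dist_def sum.distrib[symmetric] by (rule sum_mono) linarith

lemma dev_tri2: "l1dist D p q \<le> dev D p xs + dev D q xs"
  unfolding dev_def l1dist_def sum.distrib[symmetric] by (rule sum_mono) linarith

lemma lim_exp: "(a::real) > 0 \<Longrightarrow> ((\<lambda>N::nat. C * exp (- 2 * real N * a)) \<longlongrightarrow> 0) at_top"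
  by real_asymp

lemma lim_poi: "((\<lambda>m::real. m ^ k / fact k * exp (-m)) \<longlongrightarrow> 0) at_top"
  by real_asymp

lemma tester_exists:
  assumes D: "finite D" "D \<noteq> {}" and e: "e1 < e2" and d: "\<delta> > 0"
  shows "\<exists>m. 0 \<le> m \<and> (\<exists>T. good_tester D q e1 e2 \<delta> m T)"
proof -
  define \<eta> where "\<eta> = (e2 - e1) / 2"
  have eta: "\<eta> > 0" using e by (simp add: \<eta>_def)
  define k where "k = real (card D)"
  have k: "k > 0" using D by (simp add: k_def card_gt_0_iff)
  define g where "g N = k * (2 * exp (- 2 * real N * (\<eta> / k)\<^sup>2))" for N :: nat
  have "(g \<longlongrightarrow> 0) at_top"
    unfolding g_def using lim_exp[of "(\<eta> / k)\<^sup>2" "k*2"] eta k by (simp add: mult.assoc)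
  then have "eventually (\<lambda>N. g N < \<delta>/2) at_top" using d by (intro order_tendstoD(2)) auto
  then obtain K0 where K0: "\<And>N. N \<ge> K0 \<Longrightarrow> g N < \<delta>/2" by (auto simp: eventually_at_top_linorder)
  define K where "K = Suc K0"
  define h where "h m = (\<Sum>j<K. m ^ j / fact j * exp (-m))" for m :: real
  have "(h \<longlongrightarrow> 0) at_top" unfolding h_def by (intro tendsto_null_sum lim_poi)
  then have "eventually (\<lambda>m. h m < \<delta>/2) at_top" using d by (intro order_tendstoD(2)) auto
  moreover have "eventually (\<lambda>m::real. m > 0) at_top" by (rule eventually_gt_at_top)
  ultimately have "eventually (\<lambda>m. h m < \<delta>/2 \<and> m > 0) at_top" by (rule eventually_conj)
  then obtain m where m: "h m < \<delta>/2" "m > 0" by (auto simp: eventually_at_top_linorder)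
  define T where "T xs = return_pmf (dev D q xs \<le> e1 + \<eta>)" for xs
  have Poi: "Poi m = poisson_pmf m" using m by (simp add: Poi_def)
  have PK: "measure_pmf.prob (poisson_pmf m) {..<K} = h m"
    using m by (simp add: measure_measure_pmf_finite h_def)
  have tail: "measure_pmf.prob (replicate_pmf N p) {xs. dev D p xs \<ge> \<eta>} \<le> \<delta>/2" if "N \<notin> {..<K}" for N p
  proof -
    have N: "N > 0" "N \<ge> K0" using that by (auto simp: K_def)
    have "measure_pmf.prob (replicate_pmf N p) {xs. dev D p xs \<ge> \<eta>} \<le> g N"
      unfolding g_def k_def by (rule dev_tail) (use D N eta in auto)
    then show ?thesis using K0[OF N(2)] by simp
  qed
  have bt: "bind_pmf (replicate_pmf N p) T = map_pmf (\<lambda>xs. dev D q xs \<le> e1 + \<eta>) (replicate_pmf N p)" for N p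
    by (simp add: T_def[abs_def] map_pmf_def)
  have "good_tester D q e1 e2 \<delta> m T"
    unfolding good_tester_def
  proof (intro allI impI conjI)
    fix p :: "nat pmf"
    assume "l1dist D p q \<le> e1"
    have sub: "(\<lambda>xs. dev D q xs \<le> e1 + \<eta>) -` {False} \<subseteq> {xs. dev D p xs \<ge> \<eta>}"
    proof
      fix xs assume "xs \<in> (\<lambda>xs. dev D q xs \<le> e1 + \<eta>) -` {False}"
      then show "xs \<in> {xs. dev D p xs \<ge> \<eta>}"
        using dev_tri1[of D q xs p] \<open>l1dist D p q \<le> e1\<close> by auto
    qed
    have "pmf (tester_out T m p) False \<le> measure_pmf.prob (poisson_pmf m) {..<K} + \<delta>/2"
      unfolding tester_out_def Poi
    proof (rule prob_bind_le)
      fix N assume "N \<notin> {..<K}"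
      have "pmf (bind_pmf (replicate_pmf N p) T) False \<le> measure_pmf.prob (replicate_pmf N p) {xs. dev D p xs \<ge> \<eta>}"
        unfolding bt pmf_map by (rule measure_pmf.finite_measure_mono[OF sub]) simp
      then show "pmf (bind_pmf (replicate_pmf N p) T) False \<le> \<delta>/2" using tail[OF \<open>N \<notin> _\<close>, of p] by simp
    qed (use d in simp)
    then show "1 - \<delta> \<le> measure_pmf.prob (tester_out T m p) {True}"
      using PK m by (simp add: measure_pmf_single bool_pmf[of "tester_out T m p"])
  next
    fix p :: "nat pmf"
    assume far: "e2 \<le> l1dist D p q"
    have sub: "(\<lambda>xs. dev D q xs \<le> e1 + \<eta>) -` {True} \<subseteq> {xs. dev D p xs \<ge> \<eta>}"
    proof
      fix xs assume "xs \<in> (\<lambda>xs. dev D q xs \<le> e1 + \<eta>) -` {True}"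
      then show "xs \<in> {xs. dev D p xs \<ge> \<eta>}"
        using dev_tri2[of D p q xs] far by (auto simp: \<eta>_def field_simps)
    qed
    have "pmf (tester_out T m p) True \<le> measure_pmf.prob (poisson_pmf m) {..<K} + \<delta>/2"
      unfolding tester_out_def Poi
    proof (rule prob_bind_le)
      fix N assume "N \<notin> {..<K}"
      have "pmf (bind_pmf (replicate_pmf N p) T) True \<le> measure_pmf.prob (replicate_pmf N p) {xs. dev D p xs \<ge> \<eta>}"
        unfolding bt pmf_map by (rule measure_pmf.finite_measure_mono[OF sub]) simp
      then show "pmf (bind_pmf (replicate_pmf N p) T) True \<le> \<delta>/2" using tail[OF \<open>N \<notin> _\<close>, of p] by simp
    qed (use d in simp)
    then show "1 - \<delta> \<le> measure_pmf.prob (tester_out T m p) {False}"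
      using PK m by (simp add: measure_pmf_single bool_pmf[of "tester_out T m p"])
  qed
  then show ?thesis using m(2) by (intro exI[of _ m] conjI exI[of _ T]) auto
qed

lemma window_mass:
  fixes w :: "nat \<Rightarrow> real" and S :: "nat set"
  assumes fin: "finite S" and nn: "\<And>k. k \<in> S \<Longrightarrow> 0 \<le> w k" and le: "\<And>k. k \<in> S \<Longrightarrow> w k \<le> Mw"
    and a: "0 \<le> a" "a < b" "b \<le> (\<Sum>k\<in>S. w k)" and Mw: "0 \<le> Mw"
  defines "P \<equiv> (\<lambda>i. \<Sum>k\<in>S \<inter> {..<i}. w k)"
  shows "(\<Sum>i\<in>{i\<in>S. a \<le> P i \<and> P i < b}. w i) \<ge> b - a - Mw"
proof -
  have mono: "P i \<le> P j" if "i \<le> j" for i j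
    unfolding P_def using that fin nn by (intro sum_mono2) auto
  obtain B where B: "S \<subseteq> {..<B}" using fin finite_nat_bounded by blast
  have PB: "P B = (\<Sum>k\<in>S. w k)" unfolding P_def using B by (simp add: Int_absorb2)
  define \<alpha> where "\<alpha> = (LEAST i. a \<le> P i)"
  define \<beta> where "\<beta> = (LEAST i. b \<le> P i)"
  have Pa: "a \<le> P \<alpha>" unfolding \<alpha>_def by (rule LeastI[of _ B]) (use PB a in auto)
  have Pb: "b \<le> P \<beta>" unfolding \<beta>_def by (rule LeastI[of _ B]) (use PB a in auto)
  have ab: "\<alpha> \<le> \<beta>" unfolding \<alpha>_def by (rule Least_le) (use Pb a in auto)
  have eqset: "{i\<in>S. a \<le> P i \<and> P i < b} = S \<inter> {\<alpha>..<\<beta>}"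
  proof (intro set_eqI iffI)
    fix i assume i: "i \<in> {i\<in>S. a \<le> P i \<and> P i < b}"
    have "\<alpha> \<le> i" unfolding \<alpha>_def by (rule Least_le) (use i in auto)
    moreover have "i < \<beta>"
    proof (rule ccontr)
      assume "\<not> i < \<beta>"
      then have "P \<beta> \<le> P i" by (intro mono) auto
      then show False using i Pb by auto
    qed
    ultimately show "i \<in> S \<inter> {\<alpha>..<\<beta>}" using i by auto
  next
    fix i assume i: "i \<in> S \<inter> {\<alpha>..<\<beta>}"
    have "a \<le> P i" using Pa mono[of \<alpha> i] i by auto
    moreover have "\<not> b \<le> P i"
    proof -
      have "i < \<beta>" using i by simp
      then show ?thesis unfolding \<beta>_def by (rule not_less_Least)
    qed
    ultimately show "i \<in> {i\<in>S. a \<le> P i \<and> P i < b}" using i by auto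
  qed
  have split: "S \<inter> {..<\<beta>} = (S \<inter> {..<\<alpha>}) \<union> (S \<inter> {\<alpha>..<\<beta>})" using ab by auto
  have "P \<beta> = P \<alpha> + (\<Sum>i\<in>S \<inter> {\<alpha>..<\<beta>}. w i)"
    unfolding P_def split by (subst sum.union_disjoint) (use fin in auto)
  moreover have "P \<alpha> \<le> a + Mw"
  proof (cases \<alpha>)
    case 0
    then show ?thesis using a Mw by (simp add: P_def)
  next
    case (Suc \<alpha>')
    have "\<alpha>' < \<alpha>" using Suc by simp
    then have lt: "\<not> a \<le> P \<alpha>'" unfolding \<alpha>_def by (rule not_less_Least)
    have "S \<inter> {..<Suc \<alpha>'} = (if \<alpha>' \<in> S then insert \<alpha>' (S \<inter> {..<\<alpha>'}) else S \<inter> {..<\<alpha>'})"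
      by (auto simp: less_Suc_eq)
    then have "P (Suc \<alpha>') = P \<alpha>' + (if \<alpha>' \<in> S then w \<alpha>' else 0)"
      unfolding P_def using fin by (auto simp: add.commute)
    then have "P (Suc \<alpha>') \<le> P \<alpha>' + Mw" using le Mw by auto
    then show ?thesis using lt Suc by auto
  qed
  ultimately show ?thesis unfolding eqset using Pb by linarith
qed

locale red =
  fixes q :: "nat pmf" and n :: nat and S :: "nat set"
  assumes qset: "set_pmf q \<subseteq> {1..n}" and Ssub: "S \<subseteq> {1..n}" and Sne: "S \<noteq> {}"
    and R1: "Rnum q S \<ge> 1"
begin

definition "Qs = qmass q S"
definition "Mx = Mmax q S"
definition "R = Rnum q S"
definition "t = Qs / R"
definition "P i = (\<Sum>k\<in>S \<inter> {..<i}. pmf q k)"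
definition "gi i = nat \<lfloor>P i / t\<rfloor> + 1"
definition "G j = {i\<in>S. gi i = j}"
definition "mass j = (\<Sum>i\<in>G j. pmf q i)"
definition "K j = cond_pmf q (G j)"
definition "c = Qs / 4"

lemma finS: "finite S" using Ssub finite_subset by blast

lemma Mx_ge: "i \<in> S \<Longrightarrow> pmf q i \<le> Mx"
  unfolding Mx_def Mmax_def using finS by (intro Max_ge) auto

lemma Mx_nn: "0 \<le> Mx"
proof -
  obtain i where "i \<in> S" using Sne by blast
  then show ?thesis using Mx_ge[of i] pmf_nonneg[of q i] by linarith
qed

lemma Mx_pos: "0 < Mx"
proof (rule ccontr)
  assume "\<not> 0 < Mx"
  then have "Mx = 0" using Mx_nn by simp
  then have "Rnum q S = 0" by (simp add: Rnum_def Mx_def)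
  then show False using R1 by simp
qed

lemma R_ge: "R \<ge> 1" using R1 by (simp add: R_def)

lemma R_le: "real R * (2 * Mx) \<le> Qs"
proof -
  have "real R \<le> Qs / (2 * Mx)"
  proof -
    have fl: "\<lfloor>Qs / (2 * Mx)\<rfloor> \<ge> 1" using R1 unfolding Rnum_def Qs_def Mx_def by linarith
    have "real R = of_int \<lfloor>Qs / (2 * Mx)\<rfloor>" unfolding R_def Rnum_def Qs_def Mx_def
      using fl Qs_def Mx_def by simp
    also have "\<dots> \<le> Qs / (2 * Mx)" by (rule of_int_floor_le)
    finally show ?thesis .
  qed
  then show ?thesis using Mx_pos by (simp add: field_simps)
qed

lemma Qs_pos: "0 < Qs"
proof -
  have "real R * (2 * Mx) > 0" using R_ge Mx_pos by simp
  then show ?thesis using R_le by linarith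
qed

lemma Qs_meas: "Qs = measure_pmf.prob q S"
  unfolding Qs_def qmass_def using finS by (simp add: measure_measure_pmf_finite)

lemma Qs_le1: "Qs \<le> 1" unfolding Qs_meas by simp

lemma t_pos: "0 < t" unfolding t_def using Qs_pos R_ge by simp

lemma Mx_t: "Mx \<le> t / 2"
  unfolding t_def using R_le R_ge by (simp add: field_simps)

lemma c_bounds: "0 < c" "c < 1" using Qs_pos Qs_le1 by (auto simp: c_def)

lemma G_sub: "G j \<subseteq> S" by (auto simp: G_def)

lemma G_fin: "finite (G j)" using finS G_sub finite_subset by blast

lemma P_nn: "0 \<le> P i" unfolding P_def by (rule sum_nonneg) simp

lemma G_eq: assumes "j \<ge> 1" shows "G j = {i\<in>S. (real j - 1) * t \<le> P i \<and> P i < real j * t}"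
proof -
  have "gi i = j \<longleftrightarrow> (real j - 1) * t \<le> P i \<and> P i < real j * t" for i
  proof -
    have fl: "\<lfloor>P i / t\<rfloor> \<ge> 0" using P_nn t_pos by simp
    have "gi i = j \<longleftrightarrow> \<lfloor>P i / t\<rfloor> = int j - 1" unfolding gi_def using fl assms by linarith
    also have "\<dots> \<longleftrightarrow> real j - 1 \<le> P i / t \<and> P i / t < real j"
      by (simp add: floor_eq_iff)
    also have "\<dots> \<longleftrightarrow> (real j - 1) * t \<le> P i \<and> P i < real j * t"
      using t_pos by (simp add: field_simps)
    finally show ?thesis .
  qed
  then show ?thesis unfolding G_def by auto
qed

lemma mass_ge: assumes "j \<in> {1..R}" shows "mass j \<ge> t / 2"
proof -
  have jge: "j \<ge> 1" using assms by simp
  have eq: "mass j = (\<Sum>i\<in>{i\<in>S. (real j - 1) * t \<le> (\<Sum>k\<in>S \<inter> {..<i}. pmf q k) \<and>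
      (\<Sum>k\<in>S \<inter> {..<i}. pmf q k) < real j * t}. pmf q i)"
    by (simp add: mass_def G_eq[OF jge] P_def)
  have le: "real j * t \<le> (\<Sum>k\<in>S. pmf q k)"
  proof -
    have "real j \<le> real R" using assms by simp
    then have "real j * t \<le> real R * t" using t_pos by (intro mult_right_mono) auto
    also have "\<dots> = Qs" unfolding t_def using R_ge by simp
    finally show ?thesis by (simp add: Qs_def qmass_def)
  qed
  have "mass j \<ge> real j * t - (real j - 1) * t - Mx"
    unfolding eq
    by (rule window_mass) (use finS Mx_ge Mx_nn t_pos jge le in auto)
  then show ?thesis using Mx_t by (simp add: algebra_simps)
qed

end

context red begin

lemma mass_pos: "j \<in> {1..R} \<Longrightarrow> mass j > 0"
  using mass_ge[of j] t_pos by linarith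

lemma meas_G: "measure_pmf.prob q (G j) = mass j"
  unfolding mass_def using G_fin by (simp add: measure_measure_pmf_finite)

lemma K_ne: assumes "j \<in> {1..R}" shows "set_pmf q \<inter> G j \<noteq> {}"
proof
  assume e: "set_pmf q \<inter> G j = {}"
  have "mass j = 0" unfolding mass_def
    by (rule sum.neutral) (use e in \<open>auto simp: set_pmf_iff\<close>)
  then show False using mass_pos[OF assms] by simp
qed

lemma pmf_K: "j \<in> {1..R} \<Longrightarrow> pmf (K j) i = (if i \<in> G j then pmf q i / mass j else 0)"
  unfolding K_def using K_ne by (simp add: pmf_cond meas_G)

lemma K_zero: "j \<in> {1..R} \<Longrightarrow> j \<noteq> gi i \<Longrightarrow> pmf (K j) i = 0"
  by (simp add: pmf_K G_def)

lemma set_K: "j \<in> {1..R} \<Longrightarrow> set_pmf (K j) \<subseteq> {1..n}"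
  unfolding K_def using K_ne G_sub Ssub by (auto simp: set_cond_pmf)

lemma sum_K: "j \<in> {1..R} \<Longrightarrow> (\<Sum>i\<in>{1..n}. pmf (K j) i) = 1"
  using set_K by (intro sum_pmf_eq_1) auto

lemma delta: "(\<Sum>j\<in>{1..R}. y j * pmf (K j) i) =
    (if gi i \<in> {1..R} then y (gi i) * pmf (K (gi i)) i else 0)"
proof -
  have "(\<Sum>j\<in>{1..R}. y j * pmf (K j) i) = (\<Sum>j\<in>{1..R}. if j = gi i then y j * pmf (K j) i else 0)"
    by (rule sum.cong) (auto simp: K_zero)
  also have "\<dots> = (if gi i \<in> {1..R} then y (gi i) * pmf (K (gi i)) i else 0)"
    by (simp add: sum.delta)
  finally show ?thesis .
qed

definition "KU i = (\<Sum>j\<in>{1..R}. (1 / real R) * pmf (K j) i)"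
definition "fden i = (pmf q i - c * KU i) / (1 - c)"

lemma cKU_le: "c * KU i \<le> pmf q i"
proof (cases "gi i \<in> {1..R}")
  case True
  define j where "j = gi i"
  have j: "j \<in> {1..R}" using True by (simp add: j_def)
  have KU: "KU i = (1 / real R) * pmf (K j) i" unfolding KU_def delta using True by (simp add: j_def)
  show ?thesis
  proof (cases "i \<in> G j")
    case True
    have cm: "c * (1 / real R) \<le> mass j"
    proof -
      have "c * (1 / real R) = t / 4" unfolding c_def t_def by simp
      also have "\<dots> \<le> t / 2" using t_pos by simp
      also have "\<dots> \<le> mass j" by (rule mass_ge[OF j])
      finally show ?thesis .
    qed
    have "c * KU i = (c * (1 / real R)) * (pmf q i / mass j)"
      unfolding KU using True j by (simp add: pmf_K)
    also have "\<dots> \<le> mass j * (pmf q i / mass j)"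
      by (rule mult_right_mono[OF cm]) (simp add: mass_pos[OF j] less_imp_le)
    also have "\<dots> = pmf q i" using mass_pos[OF j] by simp
    finally show ?thesis .
  next
    case False
    then show ?thesis unfolding KU using j by (simp add: pmf_K)
  qed
next
  case False
  have "KU i = (if gi i \<in> {1..R} then 1/real R * pmf (K (gi i)) i else 0)"
    unfolding KU_def by (rule delta)
  then have "KU i = 0" using False by auto
  then show ?thesis by simp
qed

lemma fden_nn: "0 \<le> fden i"
  unfolding fden_def using cKU_le[of i] c_bounds by simp

lemma K_out: "j \<in> {1..R} \<Longrightarrow> i \<notin> {1..n} \<Longrightarrow> pmf (K j) i = 0"
proof -
  assume j: "j \<in> {1..R}" and i: "i \<notin> {1..n}"
  then have "i \<notin> set_pmf (K j)" using set_K[OF j] by blast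
  then show ?thesis by (simp add: set_pmf_iff)
qed

lemma KU_out: "i \<notin> {1..n} \<Longrightarrow> KU i = 0"
  unfolding KU_def by (intro sum.neutral ballI) (simp add: K_out)

lemma q_out: "i \<notin> {1..n} \<Longrightarrow> pmf q i = 0"
  using qset by (auto simp: set_pmf_iff)

lemma fden_out: "i \<notin> {1..n} \<Longrightarrow> fden i = 0"
  unfolding fden_def by (simp add: KU_out q_out)

lemma sum_KU: "(\<Sum>i\<in>{1..n}. KU i) = 1"
proof -
  have "(\<Sum>i\<in>{1..n}. KU i) = (\<Sum>j\<in>{1..R}. (1 / real R) * (\<Sum>i\<in>{1..n}. pmf (K j) i))"
    unfolding KU_def sum_distrib_left by (rule sum.swap)
  also have "\<dots> = (\<Sum>j\<in>{1..R}. (1 / real R))"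
  proof (rule sum.cong[OF refl])
    fix j assume "j \<in> {1..R}" then show "1 / real R * (\<Sum>i\<in>{1..n}. pmf (K j) i) = 1 / real R"
      using sum_K[of j] by simp
  qed
  also have "\<dots> = 1" using R_ge by simp
  finally show ?thesis .
qed

lemma sum_fden: "(\<Sum>i\<in>{1..n}. fden i) = 1"
proof -
  have sq: "(\<Sum>i\<in>{1..n}. pmf q i) = 1" using qset by (intro sum_pmf_eq_1) auto
  have "(\<Sum>i\<in>{1..n}. fden i) = ((\<Sum>i\<in>{1..n}. pmf q i) - c * (\<Sum>i\<in>{1..n}. KU i)) / (1 - c)"
    unfolding fden_def by (simp add: sum_divide_distrib[symmetric] sum_subtractf sum_distrib_left)
  also have "\<dots> = 1" unfolding sq sum_KU using c_bounds by simp
  finally show ?thesis .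
qed

lemma fden_int: "(\<integral>\<^sup>+ x. ennreal (fden x) \<partial>count_space UNIV) = 1"
proof -
  have "(\<integral>\<^sup>+ x. ennreal (fden x) \<partial>count_space UNIV) = (\<Sum>x\<in>{1..n}. ennreal (fden x))"
    by (rule nn_integral_count_space') (auto simp: fden_out)
  also have "\<dots> = ennreal (\<Sum>x\<in>{1..n}. fden x)" by (rule sum_ennreal) (simp add: fden_nn)
  also have "\<dots> = 1" unfolding sum_fden by simp
  finally show ?thesis .
qed

definition "F = embed_pmf fden"

lemma pmf_F: "pmf F i = fden i"
  unfolding F_def by (rule pmf_embed_pmf) (auto simp: fden_nn fden_int)

definition "pmix p' = bind_pmf (bernoulli_pmf c) (\<lambda>b. if b then bind_pmf p' K else F)"

lemma pmf_pmix:
  assumes "set_pmf p' \<subseteq> {1..R}"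
  shows "pmf (pmix p') i = c * (\<Sum>j\<in>{1..R}. pmf p' j * pmf (K j) i) + (1 - c) * fden i"
proof -
  have a: "pmf (bind_pmf p' K) i = (\<Sum>j\<in>{1..R}. pmf p' j * pmf (K j) i)"
    unfolding pmf_bind
    by (subst integral_measure_pmf_real[where A="{1..R}"]) (use assms in \<open>auto simp: mult.commute\<close>)
  have b: "pmf (pmix p') i = pmf (bind_pmf p' K) i * c + pmf F i * (1 - c)"
    unfolding pmix_def apply (subst pmf_bind)
    using c_bounds by (subst integral_bernoulli_pmf) auto
  show ?thesis unfolding b a pmf_F by (simp add: mult.commute)
qed

lemma pmix_diff:
  assumes "set_pmf p' \<subseteq> {1..R}"
  shows "pmf (pmix p') i - pmf q i = c * (\<Sum>j\<in>{1..R}. (pmf p' j - 1 / real R) * pmf (K j) i)"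
proof -
  have "pmf (pmix p') i - pmf q i = c * (\<Sum>j\<in>{1..R}. pmf p' j * pmf (K j) i) - c * KU i"
    unfolding pmf_pmix[OF assms] fden_def using c_bounds by (simp add: field_simps)
  also have "\<dots> = c * (\<Sum>j\<in>{1..R}. (pmf p' j - 1 / real R) * pmf (K j) i)"
    unfolding KU_def by (simp add: algebra_simps sum_subtractf sum_distrib_left)
  finally show ?thesis .
qed

lemma pmix_set: assumes "set_pmf p' \<subseteq> {1..R}" shows "set_pmf (pmix p') \<subseteq> {1..n}"
proof
  fix i assume i: "i \<in> set_pmf (pmix p')"
  show "i \<in> {1..n}"
  proof (rule ccontr)
    assume o: "i \<notin> {1..n}"
    have "pmf (pmix p') i = 0"
      unfolding pmf_pmix[OF assms] using o
      by (auto simp: fden_out K_out intro!: sum.neutral)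
    then show False using i by (simp add: set_pmf_iff)
  qed
qed

lemma pmf_Unif: "j \<in> {1..R} \<Longrightarrow> pmf (Unif R) j = 1 / real R"
  unfolding Unif_def using R_ge by (simp add: pmf_of_set)

lemma pmix_l1:
  assumes "set_pmf p' \<subseteq> {1..R}"
  shows "l1dist {1..n} (pmix p') q = c * l1dist {1..R} p' (Unif R)"
proof -
  define x where "x j = pmf p' j - 1 / real R" for j
  have abs_eq: "\<bar>\<Sum>j\<in>{1..R}. x j * pmf (K j) i\<bar> = (\<Sum>j\<in>{1..R}. \<bar>x j\<bar> * pmf (K j) i)" for i
    unfolding delta by (simp add: abs_mult)
  have "l1dist {1..n} (pmix p') q = (\<Sum>i\<in>{1..n}. c * (\<Sum>j\<in>{1..R}. \<bar>x j\<bar> * pmf (K j) i))"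
    unfolding l1dist_def pmix_diff[OF assms] x_def[symmetric] abs_mult abs_eq
    using c_bounds by simp
  also have "\<dots> = c * (\<Sum>j\<in>{1..R}. \<bar>x j\<bar> * (\<Sum>i\<in>{1..n}. pmf (K j) i))"
    unfolding sum_distrib_left[symmetric] by (subst sum.swap) (simp add: sum_distrib_left)
  also have "\<dots> = c * (\<Sum>j\<in>{1..R}. \<bar>x j\<bar>)"
  proof -
    have "(\<Sum>j\<in>{1..R}. \<bar>x j\<bar> * (\<Sum>i\<in>{1..n}. pmf (K j) i)) = (\<Sum>j\<in>{1..R}. \<bar>x j\<bar>)"
    proof (rule sum.cong[OF refl])
      fix j assume "j \<in> {1..R}" then show "\<bar>x j\<bar> * (\<Sum>i\<in>{1..n}. pmf (K j) i) = \<bar>x j\<bar>"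
        using sum_K[of j] by simp
    qed
    then show ?thesis by simp
  qed
  also have "\<dots> = c * l1dist {1..R} p' (Unif R)"
    unfolding l1dist_def x_def by (simp add: pmf_Unif)
  finally show ?thesis .
qed

end

lemma tester_out_0: "tester_out T 0 p = T []"
  by (simp add: tester_out_def Poi_def bind_return_pmf)

context red begin

definition "Tr m T = (if m = 0 then T else (\<lambda>zs. bind_pmf (seqp (map K zs)) (Tb c m F T)))"

lemma tester_out_Tr:
  assumes m: "0 \<le> m"
  shows "tester_out (Tr m T) (c*m) p' = tester_out T m (pmix p')"
proof (cases "m = 0")
  case True
  then show ?thesis by (simp add: tester_out_0 Tr_def)
next
  case False
  then have m: "0 < m" using m by simp
  have cm: "0 < c * m" using m c_bounds by simp
  have "tester_out T m (pmix p') = bind_pmf (poisson_pmf m) (\<lambda>N. bind_pmf (replicate_pmf N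
            (bind_pmf (bernoulli_pmf c) (\<lambda>b. if b then bind_pmf p' K else F))) T)"
    using m by (simp add: tester_out_def Poi_def pmix_def)
  also have "\<dots> = bind_pmf (poisson_pmf (c*m)) (\<lambda>a. bind_pmf (replicate_pmf a (bind_pmf p' K)) (Tb c m F T))"
    by (rule reduction[OF c_bounds m])
  also have "\<dots> = bind_pmf (poisson_pmf (c*m)) (\<lambda>a. bind_pmf (replicate_pmf a p') (Tr m T))"
    using m by (simp add: replicate_bind bind_assoc_pmf Tr_def)
  also have "\<dots> = tester_out (Tr m T) (c*m) p'"
    using cm by (simp add: tester_out_def Poi_def)
  finally show ?thesis by simp
qed

lemma transfer:
  assumes m: "0 \<le> m" and good: "good_tester {1..n} q e1 e2 \<delta> m T"
  shows "good_tester {1..R} (Unif R) (4 * e1 / Qs) (4 * e2 / Qs) \<delta> (c*m) (Tr m T)"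
  unfolding good_tester_def
proof (intro allI impI conjI)
  fix p' :: "nat pmf" assume sp: "set_pmf p' \<subseteq> {1..R}"
  have sp2: "set_pmf (pmix p') \<subseteq> {1..n}" by (rule pmix_set[OF sp])
  have cc: "c * (4 * e / Qs) = e" for e using Qs_pos by (simp add: c_def)
  {
    assume "l1dist {1..R} p' (Unif R) \<le> 4 * e1 / Qs"
    then have "l1dist {1..n} (pmix p') q \<le> e1"
      unfolding pmix_l1[OF sp] using c_bounds cc[of e1] by (metis mult_left_mono less_imp_le)
    then show "1 - \<delta> \<le> measure_pmf.prob (tester_out (Tr m T) (c * m) p') {True}"
      using good sp2 unfolding good_tester_def tester_out_Tr[OF m] by blast
  next
    assume "4 * e2 / Qs \<le> l1dist {1..R} p' (Unif R)"
    then have "e2 \<le> l1dist {1..n} (pmix p') q"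
      unfolding pmix_l1[OF sp] using c_bounds cc[of e2] by (metis mult_left_mono less_imp_le)
    then show "1 - \<delta> \<le> measure_pmf.prob (tester_out (Tr m T) (c * m) p') {False}"
      using good sp2 unfolding good_tester_def tester_out_Tr[OF m] by blast
  }
qed

end

theorem theoremC1:
  fixes q :: "nat pmf" and n :: nat and S :: "nat set"
    and \<epsilon>\<^sub>1 \<epsilon>\<^sub>2 \<delta> :: real
  assumes "set_pmf q \<subseteq> {1..n}"
    and "S \<subseteq> {1..n}" and "S \<noteq> {}"
    and "Rnum q S \<ge> 1"
    and "0 \<le> \<epsilon>\<^sub>1" and "\<epsilon>\<^sub>1 < \<epsilon>\<^sub>2" and "\<delta> > 0"
  shows "SC {1..n} q \<epsilon>\<^sub>1 \<epsilon>\<^sub>2 \<delta> \<ge>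
    4 / qmass q S * SC {1..Rnum q S} (Unif (Rnum q S))
        (4 * \<epsilon>\<^sub>1 / qmass q S) (4 * \<epsilon>\<^sub>2 / qmass q S) \<delta>"
proof -
  interpret red q n S using assms by unfold_locales
  define L where "L = {m. 0 \<le> m \<and> (\<exists>T. good_tester {1..n} q \<epsilon>\<^sub>1 \<epsilon>\<^sub>2 \<delta> m T)}"
  define Rs where "Rs = {m. 0 \<le> m \<and> (\<exists>T. good_tester {1..R} (Unif R) (4 * \<epsilon>\<^sub>1 / Qs) (4 * \<epsilon>\<^sub>2 / Qs) \<delta> m T)}"
  have n1: "{1..n} \<noteq> {}" using assms(2,3) by auto
  have Lne: "L \<noteq> {}"
    using tester_exists[of "{1..n}" \<epsilon>\<^sub>1 \<epsilon>\<^sub>2 \<delta> q] n1 assms by (auto simp: L_def)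
  have bdd: "bdd_below Rs" unfolding Rs_def by (rule bdd_belowI[of _ 0]) auto
  have "4 / Qs * Inf Rs \<le> m" if "m \<in> L" for m
  proof -
    from that obtain T where m: "0 \<le> m" and g: "good_tester {1..n} q \<epsilon>\<^sub>1 \<epsilon>\<^sub>2 \<delta> m T"
      by (auto simp: L_def)
    have "c * m \<in> Rs" unfolding Rs_def using transfer[OF m g] m c_bounds by auto
    then have "Inf Rs \<le> c * m" by (rule cInf_lower[OF _ bdd])
    then have "4 / Qs * Inf Rs \<le> 4 / Qs * (c * m)" using Qs_pos by (intro mult_left_mono) auto
    also have "\<dots> = m" using Qs_pos by (simp add: c_def)
    finally show ?thesis .
  qed
  then have "4 / Qs * Inf Rs \<le> Inf L" by (intro cInf_greatest[OF Lne])
  then show ?thesis unfolding SC_def L_def Rs_def Qs_def R_def .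
qed

end
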